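(* For $\eta>0$ let $\Gamma$ be the boundary of the rectangle with vertices $\pm3\pm\mathbf i\eta/2$, traversed counterclockwise. Then $$\operatorname{Im}\Big[\oint_\Gamma m_0(z)m_0(z+\mathbf i\eta)\big(m_0(z+\mathbf i\eta)-m_0(z)\big)\,dz\Big]=2\pi+o(1)\quad\text{as }\eta\to0.$$
   Context: $m_0(z)=\int\frac{\rho(x)}{x-z}dx=\frac{-z+\sqrt{z^2-4}}2$ is the Stieltjes transform of the semicircle density $\rho(x)=\frac1{2\pi}\sqrt{4-x^2}\,\mathbb 1\{|x|\le2\}$, defined for $z\in\mathbb C\setminus[-2,2]$ (branch cut on $[-2,2]$, $\sqrt{z^2-4}\sim z$ as $|z|\to\infty$). *)

theory Defs
  imports "HOL-Complex_Analysis.Complex_Analysis"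
begin

text \<open>Stieltjes transform of the semicircle law, m0 z = (-z + sqrt(z^2-4))/2, with the
branch of sqrt(z^2-4) that has its cut on [-2,2] and behaves like z at infinity.
This branch is realised as csqrt(z-2) * csqrt(z+2) (principal square roots).\<close>
definition m0 :: "complex \<Rightarrow> complex" where
  "m0 z = (- z + csqrt (z - 2) * csqrt (z + 2)) / 2"

definition rect_contour :: "real \<Rightarrow> real \<Rightarrow> complex" where
  "rect_contour \<eta> =
     linepath (Complex 3 (-\<eta>/2)) (Complex 3 (\<eta>/2)) +++
     linepath (Complex 3 (\<eta>/2)) (Complex (-3) (\<eta>/2)) +++
     linepath (Complex (-3) (\<eta>/2)) (Complex (-3) (-\<eta>/2)) +++
     linepath (Complex (-3) (-\<eta>/2)) (Complex 3 (-\<eta>/2))"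

end

theory Submission
  imports Defs
begin


lemma csqrt_cnj_nonreal: "Im w \<noteq> 0 \<Longrightarrow> csqrt (cnj w) = cnj (csqrt w)"
  by (rule complex_eqI) (auto simp: sgn_if)

lemma m0_Complex: "m0 (Complex x y) = (- Complex x y + csqrt (Complex (x-2) y) * csqrt (Complex (x+2) y)) / 2"
proof -
  have "Complex x y - 2 = Complex (x-2) y" "Complex x y + 2 = Complex (x+2) y"
    by (simp_all add: complex_eq_iff)
  then show ?thesis unfolding m0_def by simp
qed

lemma m0_cnj_gen: "Im z \<noteq> 0 \<Longrightarrow> m0 (cnj z) = cnj (m0 z)"
proof -
  assume y: "Im z \<noteq> 0"
  have "cnj z - 2 = cnj (z - 2)" "cnj z + 2 = cnj (z + 2)" by simp_all
  then have "m0 (cnj z) = (- cnj z + csqrt (cnj (z - 2)) * csqrt (cnj (z + 2))) / 2"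
    unfolding m0_def by metis
  also have "\<dots> = cnj (m0 z)" unfolding m0_def using y csqrt_cnj_nonreal[of "z-2"] csqrt_cnj_nonreal[of "z+2"] by simp
  finally show ?thesis .
qed

lemma m0_cnj: "y \<noteq> 0 \<Longrightarrow> m0 (Complex x (-y)) = cnj (m0 (Complex x y))"
proof -
  assume "y \<noteq> 0"
  moreover have "cnj (Complex x y) = Complex x (-y)" by (simp add: complex_eq_iff)
  ultimately show ?thesis using m0_cnj_gen[of "Complex x y"] by simp
qed

lemma csqrt_up:
  fixes a c :: real assumes c: "c > 0"
  shows "((\<lambda>\<eta>. csqrt (Complex a (c*\<eta>))) \<longlongrightarrow> csqrt (of_real a)) (at_right 0)"
  unfolding tendsto_complex_iff
proof (intro conjI)
  have 1: "((\<lambda>\<eta>. sqrt ((sqrt (a\<^sup>2 + (c*\<eta>)\<^sup>2) + a) / 2)) \<longlongrightarrow> sqrt ((sqrt (a\<^sup>2 + (c*0)\<^sup>2) + a) / 2)) (at_right 0)"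
    by (intro tendsto_intros) simp
  have 2: "Re (csqrt (of_real a)) = sqrt ((sqrt (a\<^sup>2 + (c*0)\<^sup>2) + a) / 2)"
    by simp
  have 3: "(\<lambda>\<eta>. Re (csqrt (Complex a (c*\<eta>)))) = (\<lambda>\<eta>. sqrt ((sqrt (a\<^sup>2 + (c*\<eta>)\<^sup>2) + a) / 2))"
    by (simp add: complex_norm)
  show "((\<lambda>\<eta>. Re (csqrt (Complex a (c*\<eta>)))) \<longlongrightarrow> Re (csqrt (of_real a))) (at_right 0)"
    unfolding 2 3 by (rule 1)
  have 4: "((\<lambda>\<eta>. sqrt ((sqrt (a\<^sup>2 + (c*\<eta>)\<^sup>2) - a) / 2)) \<longlongrightarrow> sqrt ((sqrt (a\<^sup>2 + (c*0)\<^sup>2) - a) / 2)) (at_right 0)"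
    by (intro tendsto_intros) simp
  have 5: "Im (csqrt (of_real a)) = sqrt ((sqrt (a\<^sup>2 + (c*0)\<^sup>2) - a) / 2)"
    by simp
  have 6: "eventually (\<lambda>\<eta>. sqrt ((sqrt (a\<^sup>2 + (c*\<eta>)\<^sup>2) - a) / 2) = Im (csqrt (Complex a (c*\<eta>)))) (at_right 0)"
  proof -
    have "eventually (\<lambda>\<eta>. \<eta> > 0) (at_right (0::real))" by (simp add: eventually_at_right_less)
    then show ?thesis
    proof (rule eventually_mono)
      fix \<eta> :: real assume "\<eta> > 0"
      then have "c * \<eta> > 0" using c by simp
      then show "sqrt ((sqrt (a\<^sup>2 + (c*\<eta>)\<^sup>2) - a) / 2) = Im (csqrt (Complex a (c*\<eta>)))"
        by (simp add: complex_norm)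
    qed
  qed
  show "((\<lambda>\<eta>. Im (csqrt (Complex a (c*\<eta>)))) \<longlongrightarrow> Im (csqrt (of_real a))) (at_right 0)"
    unfolding 5 using 4 6 by (rule Lim_transform_eventually)
qed
lemma m0_up:
  fixes x c :: real assumes c: "c > 0"
  shows "((\<lambda>\<eta>. m0 (Complex x (c*\<eta>))) \<longlongrightarrow> m0 (of_real x)) (at_right 0)"
proof -
  have "((\<lambda>\<eta>. (- Complex x (c*\<eta>) + csqrt (Complex (x-2) (c*\<eta>)) * csqrt (Complex (x+2) (c*\<eta>))) / 2)
     \<longlongrightarrow> (- Complex x (c*0) + csqrt (of_real (x-2)) * csqrt (of_real (x+2))) / 2) (at_right 0)"
    by (intro tendsto_intros csqrt_up c tendsto_Complex) simp
  moreover have "Complex x 0 - 2 = Complex (x-2) 0" "Complex x 0 + 2 = Complex (x+2) 0"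
    by (simp_all add: complex_eq_iff)
  then have "(- Complex x (c*0) + csqrt (of_real (x-2)) * csqrt (of_real (x+2))) / 2 = m0 (of_real x)"
    unfolding m0_def by (simp add: complex_of_real_def)
  ultimately show ?thesis unfolding m0_Complex by simp
qed

lemma m0_norm: "norm (m0 z) \<le> 1"
proof -
  define a where "a = csqrt (z - 2)"
  define b where "b = csqrt (z + 2)"
  have a2: "a^2 = z - 2" and b2: "b^2 = z + 2" by (simp_all add: a_def b_def)
  have m: "m0 z = - ((a - b)^2) / 4"
  proof -
    have hz: "z = (a^2 + b^2)/2" using a2 b2 by simp
    show ?thesis unfolding m0_def a_def[symmetric] b_def[symmetric]
      by (subst hz) (simp add: field_simps power2_eq_square)
  qed
  have prod: "norm (a - b) * norm (a + b) = 4"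
  proof -
    have "(a - b) * (a + b) = -4" using a2 b2 by (simp add: algebra_simps power2_eq_square)
    then show ?thesis by (metis norm_minus_cancel norm_mult norm_numeral)
  qed
  have ra: "Re a \<ge> 0" and rb: "Re b \<ge> 0" unfolding a_def b_def by (rule Re_csqrt)+
  have iab: "Im a * Im b \<ge> 0"
  proof -
    define s where "s = (if Im z = 0 then 1 else sgn (Im z))"
    have "Im a = s * sqrt ((cmod (z - 2) - Re (z - 2)) / 2)"
      unfolding a_def s_def by simp
    moreover have "Im b = s * sqrt ((cmod (z + 2) - Re (z + 2)) / 2)"
      unfolding b_def s_def by simp
    ultimately have "Im a * Im b = s^2 * (sqrt ((cmod (z - 2) - Re (z - 2)) / 2) * sqrt ((cmod (z + 2) - Re (z + 2)) / 2))"
      by (simp add: power2_eq_square algebra_simps)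
    also have "\<dots> \<ge> 0" by (intro mult_nonneg_nonneg) (use complex_Re_le_cmod[of "z-2"] complex_Re_le_cmod[of "z+2"] in simp_all)
    finally show ?thesis .
  qed
  have "(norm (a - b))^2 \<le> (norm (a + b))^2"
    unfolding cmod_power2 using mult_nonneg_nonneg[OF ra rb] iab
    by (simp add: power2_eq_square algebra_simps)
  then have le: "norm (a - b) \<le> norm (a + b)" by (simp add: power2_le_iff_abs_le)
  have "(norm (a - b))^2 \<le> 4"
    using mult_left_mono[OF le norm_ge_zero[of "a - b"]] prod by (simp add: power2_eq_square)
  then show ?thesis unfolding m by (simp add: norm_power)
qed

lemma csqrt_flip:
  assumes "Im w \<noteq> 0 \<or> Re w < 0"
  shows "csqrt w = (if Im w < 0 then - \<i> else \<i>) * csqrt (- w)"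
proof (cases "Im w < 0")
  case True
  then have "csqrt (- w) = \<i> * csqrt w" by simp
  then show ?thesis using True by simp
next
  case False
  then have "Im (- w) < 0 \<or> (Im (- w) = 0 \<and> 0 \<le> Re (- w))" using assms by auto
  then have "csqrt (- (- w)) = \<i> * csqrt (- w)" by (rule csqrt_minus)
  then show ?thesis using False by simp
qed

lemma m0_alt:
  assumes "Im z \<noteq> 0 \<or> Re z < -2"
  shows "m0 z = (- z - csqrt (2 - z) * csqrt (-2 - z)) / 2"
proof -
  have 1: "csqrt (z - 2) = (if Im z < 0 then - \<i> else \<i>) * csqrt (2 - z)"
    using csqrt_flip[of "z - 2"] assms by auto
  have 2: "csqrt (z + 2) = (if Im z < 0 then - \<i> else \<i>) * csqrt (-2 - z)"
  proof -
    have e: "- (z + 2) = -2 - z" by simp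
    show ?thesis using csqrt_flip[of "z + 2", unfolded e] assms by auto
  qed
  show ?thesis unfolding m0_def 1 2 by (cases "Im z < 0") (simp_all add: field_simps)
qed

lemma m0_isCont: "Im z \<noteq> 0 \<or> 2 < \<bar>Re z\<bar> \<Longrightarrow> isCont m0 z"
proof -
  assume h: "Im z \<noteq> 0 \<or> 2 < \<bar>Re z\<bar>"
  show ?thesis
  proof (cases "Im z \<noteq> 0 \<or> 2 < Re z")
    case True
    have "z - 2 \<notin> \<real>\<^sub>\<le>\<^sub>0" "z + 2 \<notin> \<real>\<^sub>\<le>\<^sub>0"
      using True by (auto simp: complex_nonpos_Reals_iff)
    then have "isCont csqrt (z - 2)" "isCont csqrt (z + 2)" by (simp_all add: continuous_at_csqrt)
    then have "isCont (\<lambda>w. csqrt (w - 2)) z" "isCont (\<lambda>w. csqrt (w + 2)) z"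
      by (auto intro!: continuous_intros isCont_o2[where g = csqrt])
    then show ?thesis unfolding m0_def[abs_def] by (intro continuous_intros) auto
  next
    case False
    then have lt: "Re z < -2" using h by auto
    have ev: "eventually (\<lambda>w. m0 w = (- w - csqrt (2 - w) * csqrt (-2 - w)) / 2) (nhds z)"
    proof -
      have "eventually (\<lambda>w. w \<in> {w. Re w < -2}) (nhds z)"
        by (rule eventually_nhds_in_open) (use lt in \<open>auto intro: open_halfspace_Re_lt\<close>)
      then show ?thesis by eventually_elim (rule m0_alt, simp)
    qed
    have "2 - z \<notin> \<real>\<^sub>\<le>\<^sub>0" "-2 - z \<notin> \<real>\<^sub>\<le>\<^sub>0"
      using lt by (auto simp: complex_nonpos_Reals_iff)
    then have "isCont csqrt (2 - z)" "isCont csqrt (-2 - z)" by (simp_all add: continuous_at_csqrt)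
    then have "isCont (\<lambda>w. csqrt (2 - w)) z" "isCont (\<lambda>w. csqrt (-2 - w)) z"
      by (auto intro!: continuous_intros isCont_o2[where g = csqrt])
    then have "isCont (\<lambda>w. (- w - csqrt (2 - w) * csqrt (-2 - w)) / 2) z"
      by (intro continuous_intros) auto
    then show ?thesis using isCont_cong[OF ev] by simp
  qed
qed
lemma csqrt_ofr_neg: "x \<le> 0 \<Longrightarrow> csqrt (of_real x) = \<i> * of_real (sqrt (-x))"
  by (cases "x = 0") (simp_all add: csqrt_of_real')

lemma csqrt_ofr_pos: "x \<ge> 0 \<Longrightarrow> csqrt (of_real x) = of_real (sqrt x)"
  by (simp add: csqrt_of_real)

lemma m0_ofr: "m0 (of_real x) = (- of_real x + csqrt (of_real (x - 2)) * csqrt (of_real (x + 2))) / 2"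
  unfolding m0_def by simp

lemma m0_real_in:
  assumes "\<bar>x\<bar> \<le> 2"
  shows "m0 (of_real x) = Complex (-x/2) (sqrt (4 - x^2)/2)"
proof -
  have "sqrt (2 - x) * sqrt (x + 2) = sqrt (4 - x^2)"
    by (simp add: real_sqrt_mult[symmetric] power2_eq_square algebra_simps)
  then have "csqrt (of_real (x - 2)) * csqrt (of_real (x + 2)) = \<i> * of_real (sqrt (4 - x^2))"
    using assms by (simp add: csqrt_ofr_neg csqrt_ofr_pos flip: of_real_mult)
  then show ?thesis unfolding m0_ofr by (simp add: complex_eq_iff)
qed

lemma m0_real_out:
  assumes "\<bar>x\<bar> > 2"
  shows "Im (m0 (of_real x)) = 0"
proof (cases "x > 2")
  case True
  then show ?thesis unfolding m0_ofr by (simp add: csqrt_ofr_pos)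
next
  case False
  then have x: "x < -2" using assms by auto
  then show ?thesis unfolding m0_ofr by (simp add: csqrt_ofr_neg)
qed

lemma F0_deriv:
  fixes x :: real assumes "-2 < x" "x < 2"
  shows "((\<lambda>x. x/2 * sqrt (4 - x^2) + 2 * arcsin (x/2)) has_real_derivative sqrt (4 - x^2)) (at x)"
proof -
  have "(2 - x) * (2 + x) > 0" using assms by (intro mult_pos_pos) auto
  then have pos: "4 - x^2 > 0" by (simp add: algebra_simps power2_eq_square)
  define s where "s = sqrt (4 - x^2)"
  have s0: "s > 0" using pos by (simp add: s_def)
  have ss: "s^2 = 4 - x^2" using pos by (simp add: s_def)
  have s1: "sqrt (1 - (x/2)^2) = s/2"
  proof -
    have e: "1 - (x/2)^2 = (4 - x^2)/4" by (simp add: field_simps power2_eq_square)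
    have f: "sqrt (4::real) = 2" using real_sqrt_abs[of 2] by simp
    show ?thesis unfolding e real_sqrt_divide f s_def ..
  qed
  have d1: "((\<lambda>x. 4 - x^2) has_real_derivative (- (2 * x))) (at x)"
    by (rule derivative_eq_intros refl | simp)+
  have d2: "((\<lambda>x. sqrt (4 - x^2)) has_real_derivative (inverse (sqrt (4 - x^2)) / 2) * (- (2 * x))) (at x)"
    by (rule DERIV_chain2[OF DERIV_real_sqrt[OF pos] d1])
  have d3: "((\<lambda>x. x / 2) has_real_derivative 1/2) (at x)"
    using DERIV_cdivide[OF DERIV_ident, of 2 x] by simp
  have d4: "((\<lambda>x. x/2 * sqrt (4 - x^2)) has_real_derivative 1/2 * sqrt (4 - x^2) + (inverse (sqrt (4 - x^2)) / 2) * (- (2 * x)) * (x/2)) (at x)"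
    by (rule DERIV_mult[OF d3 d2])
  have xa: "- 1 < x/2" "x/2 < 1" using assms by auto
  have d5: "((\<lambda>x. arcsin (x/2)) has_real_derivative inverse (sqrt (1 - (x/2)^2)) * (1/2)) (at x)"
    by (rule DERIV_chain2[OF DERIV_arcsin[OF xa] d3])
  have d6: "((\<lambda>x. x/2 * sqrt (4 - x^2) + 2 * arcsin (x/2)) has_real_derivative
     (1/2 * sqrt (4 - x^2) + (inverse (sqrt (4 - x^2)) / 2) * (- (2 * x)) * (x/2)) + 2 * (inverse (sqrt (1 - (x/2)^2)) * (1/2))) (at x)"
    by (rule DERIV_add[OF d4 DERIV_cmult[OF d5]])
  have eq: "(1/2 * sqrt (4 - x^2) + (inverse (sqrt (4 - x^2)) / 2) * (- (2 * x)) * (x/2)) + 2 * (inverse (sqrt (1 - (x/2)^2)) * (1/2)) = sqrt (4 - x^2)"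
    unfolding s1 s_def[symmetric] using s0 ss
    by (simp add: field_simps power2_eq_square)
  show ?thesis using d6 unfolding eq .
qed
definition F0 :: "real \<Rightarrow> real" where "F0 x = x/2 * sqrt (4 - x^2) + 2 * arcsin (x/2)"

lemma h_integral:
  "((\<lambda>t. if \<bar>6*t-3\<bar> \<le> 2 then 6 * sqrt (4 - (6*t-3)^2) else 0) has_integral 2*pi) {0..1::real}"
proof -
  define G where "G t = F0 (6*t-3)" for t
  have cont: "continuous_on {1/6..5/6} G"
  proof -
    have "continuous_on {1/6..5/6::real} (\<lambda>t. (6*t-3)/2)" by (intro continuous_intros) auto
    moreover have "\<forall>t\<in>{1/6..5/6::real}. -1 \<le> (6*t-3)/2 \<and> (6*t-3)/2 \<le> 1" by auto
    ultimately have "continuous_on {1/6..5/6::real} (\<lambda>t. arcsin ((6*t-3)/2))"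
      by (intro continuous_on_arcsin) auto
    then show ?thesis unfolding G_def F0_def by (intro continuous_intros) auto
  qed
  have der: "(G has_vector_derivative (6 * sqrt (4 - (6*t-3)^2))) (at t)" if "t \<in> {1/6<..<5/6}" for t
  proof -
    have x: "-2 < 6*t-3" "6*t-3 < 2" using that by auto
    have d: "((\<lambda>t. 6*t-3) has_real_derivative 6) (at t)"
      by (rule derivative_eq_intros refl | simp)+
    have "(G has_real_derivative (sqrt (4 - (6*t-3)^2) * 6)) (at t)"
      unfolding G_def F0_def[abs_def]
      by (rule DERIV_chain2[OF F0_deriv[OF x] d])
    then show ?thesis by (simp add: has_real_derivative_iff_has_vector_derivative mult.commute)
  qed
  have "((\<lambda>t. 6 * sqrt (4 - (6*t-3)^2)) has_integral (G (5/6) - G (1/6))) {1/6..5/6}"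
    by (rule fundamental_theorem_of_calculus_interior[OF _ cont der]) auto
  moreover have "G (5/6) - G (1/6) = 2 * pi" unfolding G_def F0_def by simp
  ultimately have A: "((\<lambda>t. 6 * sqrt (4 - (6*t-3)^2)) has_integral 2*pi) {1/6..5/6}" by simp
  have B: "((\<lambda>t. if \<bar>6*t-3\<bar> \<le> 2 then 6 * sqrt (4 - (6*t-3)^2) else 0) has_integral 2*pi) {1/6..5/6::real}"
    by (rule has_integral_cong[THEN iffD1, OF _ A]) auto
  show ?thesis
    by (rule has_integral_on_superset[OF B]) auto
qed


lemma dc_at_right:
  fixes f :: "real \<Rightarrow> real \<Rightarrow> complex"
  assumes int: "\<And>\<eta>. \<eta> > 0 \<Longrightarrow> f \<eta> integrable_on {0..1}"
    and bd: "\<And>\<eta> t. \<eta> > 0 \<Longrightarrow> t \<in> {0..1} \<Longrightarrow> norm (f \<eta> t) \<le> B"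
    and lim: "\<And>t. t \<in> {0..1} \<Longrightarrow> ((\<lambda>\<eta>. f \<eta> t) \<longlongrightarrow> g t) (at_right 0)"
  shows "((\<lambda>\<eta>. integral {0..1} (f \<eta>)) \<longlongrightarrow> integral {0..1} g) (at_right 0)"
  unfolding tendsto_at_iff_sequentially
proof (intro allI impI)
  fix X :: "nat \<Rightarrow> real"
  assume X: "\<forall>i. X i \<in> {0<..} - {0}" and X0: "X \<longlonglongrightarrow> 0"
  have Xp: "X i > 0" for i using X by auto
  have fX: "filterlim X (at_right 0) sequentially"
    by (rule tendsto_imp_filterlim_at_right[OF X0]) (use Xp in auto)
  have "(\<lambda>k. integral {0..1} (f (X k))) \<longlonglongrightarrow> integral {0..1} g"
  proof (rule dominated_convergence(2))
    show "f (X k) integrable_on {0..1}" for k using int Xp by auto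
    show "(\<lambda>_. B) integrable_on {0..1::real}" by (intro integrable_continuous_interval continuous_intros)
    show "norm (f (X k) t) \<le> B" if "t \<in> {0..1}" for k t using bd Xp that by auto
    show "(\<lambda>k. f (X k) t) \<longlonglongrightarrow> g t" if "t \<in> {0..1}" for t
      by (rule filterlim_compose[OF lim[OF that] fX])
  qed
  then show "((\<lambda>\<eta>. integral {0..1} (f \<eta>)) \<circ> X) \<longlonglongrightarrow> integral {0..1} g"
    by (simp add: comp_def)
qed

lemma F_bound: "norm (m0 a * m0 b * (m0 b - m0 a)) \<le> 2"
proof -
  have "norm (m0 b - m0 a) \<le> 2"
    using norm_triangle_ineq4[of "m0 b" "m0 a"] m0_norm[of a] m0_norm[of b] by simp
  moreover have "norm (m0 a * m0 b) \<le> 1"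
    using m0_norm[of a] m0_norm[of b] by (simp add: norm_mult mult_le_one)
  ultimately show ?thesis
    using mult_mono[of "norm (m0 a * m0 b)" 1 "norm (m0 b - m0 a)" 2] by (simp add: norm_mult)
qed

lemma seg_Re_Im:
  assumes "z \<in> closed_segment a b"
  shows "Re z \<in> closed_segment (Re a) (Re b)" "Im z \<in> closed_segment (Im a) (Im b)"
proof -
  obtain u where u: "0 \<le> u" "u \<le> 1" "z = (1 - u) *\<^sub>R a + u *\<^sub>R b"
    using assms by (auto simp: in_segment)
  show "Re z \<in> closed_segment (Re a) (Re b)" unfolding in_segment
    by (rule exI[of _ u]) (use u in simp)
  show "Im z \<in> closed_segment (Im a) (Im b)" unfolding in_segment
    by (rule exI[of _ u]) (use u in simp)
qed

definition FF :: "real \<Rightarrow> complex \<Rightarrow> complex" where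
  "FF \<eta> z = m0 z * m0 (z + \<i> * of_real \<eta>) * (m0 (z + \<i> * of_real \<eta>) - m0 z)"

lemma FF_cont:
  assumes "\<eta> > 0" and S: "\<And>z. z \<in> S \<Longrightarrow> (Im z \<noteq> 0 \<or> 2 < \<bar>Re z\<bar>) \<and> Im z > - \<eta>"
  shows "continuous_on S (FF \<eta>)"
proof (rule continuous_at_imp_continuous_on, intro ballI)
  fix z assume z: "z \<in> S"
  have c1: "isCont m0 z" using S[OF z] by (intro m0_isCont) auto
  have "Im (z + \<i> * of_real \<eta>) \<noteq> 0" using S[OF z] by simp
  then have "isCont m0 (z + \<i> * of_real \<eta>)" by (intro m0_isCont) auto
  then have c2: "isCont (\<lambda>z. m0 (z + \<i> * of_real \<eta>)) z"
    by (rule isCont_o2[rotated]) (intro continuous_intros)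
  show "isCont (FF \<eta>) z" unfolding FF_def[abs_def] using c1 c2 by (intro continuous_intros)
qed


lemma FF_bound: "norm (FF \<eta> z) \<le> 2"
  unfolding FF_def by (rule F_bound)

lemma top_lim: "((\<lambda>\<eta>. FF \<eta> (Complex x (\<eta>/2))) \<longlongrightarrow> 0) (at_right 0)"
proof -
  have e: "FF \<eta> (Complex x (\<eta>/2)) = m0 (Complex x (1/2*\<eta>)) * m0 (Complex x (3/2*\<eta>)) * (m0 (Complex x (3/2*\<eta>)) - m0 (Complex x (1/2*\<eta>)))" for \<eta>
  proof -
    have "Complex x (\<eta>/2) + \<i> * of_real \<eta> = Complex x (3/2*\<eta>)" by (simp add: complex_eq_iff)
    moreover have "Complex x (\<eta>/2) = Complex x (1/2*\<eta>)" by simp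
    ultimately show ?thesis unfolding FF_def by metis
  qed
  have "((\<lambda>\<eta>. m0 (Complex x (1/2*\<eta>)) * m0 (Complex x (3/2*\<eta>)) * (m0 (Complex x (3/2*\<eta>)) - m0 (Complex x (1/2*\<eta>))))
     \<longlongrightarrow> m0 (of_real x) * m0 (of_real x) * (m0 (of_real x) - m0 (of_real x))) (at_right 0)"
    by (intro tendsto_intros m0_up) auto
  then show ?thesis unfolding e by simp
qed

lemma bottom_lim: "((\<lambda>\<eta>. FF \<eta> (Complex x (-\<eta>/2))) \<longlongrightarrow>
     cnj (m0 (of_real x)) * m0 (of_real x) * (m0 (of_real x) - cnj (m0 (of_real x)))) (at_right 0)"
proof -
  have e: "FF \<eta> (Complex x (-\<eta>/2)) = cnj (m0 (Complex x (1/2*\<eta>))) * m0 (Complex x (1/2*\<eta>)) * (m0 (Complex x (1/2*\<eta>)) - cnj (m0 (Complex x (1/2*\<eta>))))"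
    if "\<eta> > 0" for \<eta>
  proof -
    have "Complex x (-\<eta>/2) + \<i> * of_real \<eta> = Complex x (1/2*\<eta>)" by (simp add: complex_eq_iff)
    moreover have "m0 (Complex x (-\<eta>/2)) = cnj (m0 (Complex x (1/2*\<eta>)))"
      using m0_cnj[of "1/2*\<eta>" x] that by simp
    ultimately show ?thesis unfolding FF_def by metis
  qed
  have "((\<lambda>\<eta>. cnj (m0 (Complex x (1/2*\<eta>))) * m0 (Complex x (1/2*\<eta>)) * (m0 (Complex x (1/2*\<eta>)) - cnj (m0 (Complex x (1/2*\<eta>)))))
     \<longlongrightarrow> cnj (m0 (of_real x)) * m0 (of_real x) * (m0 (of_real x) - cnj (m0 (of_real x)))) (at_right 0)"
    by (intro tendsto_intros m0_up) auto
  moreover have "eventually (\<lambda>\<eta>. cnj (m0 (Complex x (1/2*\<eta>))) * m0 (Complex x (1/2*\<eta>)) * (m0 (Complex x (1/2*\<eta>)) - cnj (m0 (Complex x (1/2*\<eta>))))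
      = FF \<eta> (Complex x (-\<eta>/2))) (at_right 0)"
    using eventually_at_right_less[of 0] by eventually_elim (rule e[symmetric])
  ultimately show ?thesis by (rule Lim_transform_eventually)
qed

lemma limit_value:
  fixes t :: real
  defines "v \<equiv> m0 (of_real (6*t-3))"
  shows "6 * (cnj v * v * (v - cnj v)) = (if \<bar>6*t-3\<bar> \<le> 2 then 6 * sqrt (4 - (6*t-3)^2) else 0) *\<^sub>R \<i>"
proof (cases "\<bar>6*t-3\<bar> \<le> 2")
  case True
  define x where "x = 6*t-3"
  have x: "\<bar>x\<bar> \<le> 2" using True by (simp add: x_def)
  have "\<bar>x\<bar>^2 \<le> 2^2" by (rule power_mono) (use x in auto)
  then have "x^2 \<le> 2^2" by simp
  then have sq: "(sqrt (4 - x^2))^2 = 4 - x^2" by simp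
  have v: "v = Complex (-x/2) (sqrt (4 - x^2)/2)" unfolding v_def x_def[symmetric] using m0_real_in[OF x] .
  show ?thesis using True sq unfolding v x_def[symmetric]
    by (simp add: complex_eq_iff field_simps power2_eq_square)
next
  case False
  then have "Im v = 0" unfolding v_def by (intro m0_real_out) auto
  then have "v - cnj v = 0" by (simp add: complex_eq_iff)
  then show ?thesis using False by simp
qed


lemma edge_int:
  assumes "continuous_on (closed_segment a b) f"
  shows "contour_integral (linepath a b) f = integral {0..1} (\<lambda>t. f (linepath a b t) * (b - a))"
    and "(\<lambda>t. f (linepath a b t) * (b - a)) integrable_on {0..1}"
proof -
  have "(f has_contour_integral (contour_integral (linepath a b) f)) (linepath a b)"
    using contour_integrable_continuous_linepath[OF assms] by (rule has_contour_integral_integral)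
  then have h: "((\<lambda>t. f (linepath a b t) * (b - a)) has_integral (contour_integral (linepath a b) f)) {0..1}"
    by (simp add: has_contour_integral_linepath)
  show "contour_integral (linepath a b) f = integral {0..1} (\<lambda>t. f (linepath a b t) * (b - a))"
    by (rule integral_unique[OF h, symmetric])
  show "(\<lambda>t. f (linepath a b t) * (b - a)) integrable_on {0..1}"
    using h by blast
qed

lemma cont_edges:
  assumes "\<eta> > 0"
  shows "continuous_on (closed_segment (Complex 3 (-\<eta>/2)) (Complex 3 (\<eta>/2))) (FF \<eta>)"
    "continuous_on (closed_segment (Complex 3 (\<eta>/2)) (Complex (-3) (\<eta>/2))) (FF \<eta>)"
    "continuous_on (closed_segment (Complex (-3) (\<eta>/2)) (Complex (-3) (-\<eta>/2))) (FF \<eta>)"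
    "continuous_on (closed_segment (Complex (-3) (-\<eta>/2)) (Complex 3 (-\<eta>/2))) (FF \<eta>)"
proof -
  have ivl: "closed_segment (-\<eta>/2) (\<eta>/2) = {-\<eta>/2..\<eta>/2}" "closed_segment (\<eta>/2) (-\<eta>/2) = {-\<eta>/2..\<eta>/2}"
    using assms by (auto simp: closed_segment_eq_real_ivl)
  show "continuous_on (closed_segment (Complex 3 (-\<eta>/2)) (Complex 3 (\<eta>/2))) (FF \<eta>)"
    by (rule FF_cont[OF assms]) (use assms seg_Re_Im ivl in fastforce)
  show "continuous_on (closed_segment (Complex 3 (\<eta>/2)) (Complex (-3) (\<eta>/2))) (FF \<eta>)"
    by (rule FF_cont[OF assms]) (use assms seg_Re_Im in fastforce)
  show "continuous_on (closed_segment (Complex (-3) (\<eta>/2)) (Complex (-3) (-\<eta>/2))) (FF \<eta>)"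
    by (rule FF_cont[OF assms]) (use assms seg_Re_Im ivl in fastforce)
  show "continuous_on (closed_segment (Complex (-3) (-\<eta>/2)) (Complex 3 (-\<eta>/2))) (FF \<eta>)"
    by (rule FF_cont[OF assms]) (use assms seg_Re_Im in fastforce)
qed


lemma main_lim:
  "((\<lambda>\<eta>. contour_integral (rect_contour \<eta>) (FF \<eta>)) \<longlongrightarrow> 0 + (0 + (0 + (2*pi) *\<^sub>R \<i>))) (at_right 0)"
proof -
  define I1 where "I1 \<eta> = contour_integral (linepath (Complex 3 (-\<eta>/2)) (Complex 3 (\<eta>/2))) (FF \<eta>)" for \<eta>
  define I3 where "I3 \<eta> = contour_integral (linepath (Complex (-3) (\<eta>/2)) (Complex (-3) (-\<eta>/2))) (FF \<eta>)" for \<eta>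
  define f2 where "f2 \<eta> t = FF \<eta> (Complex (3-6*t) (\<eta>/2)) * (-6)" for \<eta> t
  define f4 where "f4 \<eta> t = FF \<eta> (Complex (6*t-3) (-\<eta>/2)) * 6" for \<eta> t
  have lp2: "linepath (Complex 3 (\<eta>/2)) (Complex (-3) (\<eta>/2)) t = Complex (3-6*t) (\<eta>/2)" for \<eta> t
    by (simp add: linepath_def complex_eq_iff algebra_simps)
  have lp4: "linepath (Complex (-3) (-\<eta>/2)) (Complex 3 (-\<eta>/2)) t = Complex (6*t-3) (-\<eta>/2)" for \<eta> t
    by (simp add: linepath_def complex_eq_iff algebra_simps)
  have d2: "Complex (-3) (\<eta>/2) - Complex 3 (\<eta>/2) = -6" for \<eta> by (simp add: complex_eq_iff)
  have d4: "Complex 3 (-\<eta>/2) - Complex (-3) (-\<eta>/2) = 6" for \<eta> by (simp add: complex_eq_iff)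
  have int2: "f2 \<eta> integrable_on {0..1}" "contour_integral (linepath (Complex 3 (\<eta>/2)) (Complex (-3) (\<eta>/2))) (FF \<eta>) = integral {0..1} (f2 \<eta>)"
    if "\<eta> > 0" for \<eta>
    using edge_int[OF cont_edges(2)[OF that]] unfolding lp2 d2 f2_def by auto
  have int4: "f4 \<eta> integrable_on {0..1}" "contour_integral (linepath (Complex (-3) (-\<eta>/2)) (Complex 3 (-\<eta>/2))) (FF \<eta>) = integral {0..1} (f4 \<eta>)"
    if "\<eta> > 0" for \<eta>
    using edge_int[OF cont_edges(4)[OF that]] unfolding lp4 d4 f4_def by auto
  have split: "contour_integral (rect_contour \<eta>) (FF \<eta>) = I1 \<eta> + (integral {0..1} (f2 \<eta>) + (I3 \<eta> + integral {0..1} (f4 \<eta>)))"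
    if "\<eta> > 0" for \<eta>
    unfolding rect_contour_def I1_def I3_def int2(2)[OF that, symmetric] int4(2)[OF that, symmetric]
    using cont_edges[OF that]
    by (simp add: contour_integrable_continuous_linepath contour_integrable_joinI valid_path_join)
  have vert: "((\<lambda>\<eta>. I \<eta>) \<longlongrightarrow> 0) (at_right 0)"
    if bound: "\<And>\<eta>. \<eta> > 0 \<Longrightarrow> norm (I \<eta>) \<le> 2 * \<eta>" for I :: "real \<Rightarrow> complex"
  proof (rule Lim_null_comparison)
    show "eventually (\<lambda>\<eta>. norm (I \<eta>) \<le> 2 * \<eta>) (at_right 0)"
      using eventually_at_right_less[of 0] by eventually_elim (rule bound)
    show "((\<lambda>\<eta>. 2 * \<eta>) \<longlongrightarrow> 0) (at_right (0::real))"
      by (rule tendsto_eq_intros refl | simp)+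
  qed
  have L1: "(I1 \<longlongrightarrow> 0) (at_right 0)"
  proof (rule vert)
    fix \<eta> :: real assume h: "\<eta> > 0"
    have c: "Complex 3 (\<eta>/2) - Complex 3 (-\<eta>/2) = Complex 0 \<eta>" by (simp add: complex_eq_iff)
    have "norm (I1 \<eta>) \<le> 2 * norm (Complex 3 (\<eta>/2) - Complex 3 (-\<eta>/2))"
      unfolding I1_def
      by (rule contour_integral_bound_linepath)
         (use cont_edges(1)[OF h] F_bound in \<open>auto simp: FF_def contour_integrable_continuous_linepath\<close>)
    also have "norm (Complex 3 (\<eta>/2) - Complex 3 (-\<eta>/2)) = \<eta>"
      unfolding c using h by (simp add: complex_norm)
    finally show "norm (I1 \<eta>) \<le> 2 * \<eta>" .
  qed
  have L3: "(I3 \<longlongrightarrow> 0) (at_right 0)"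
  proof (rule vert)
    fix \<eta> :: real assume h: "\<eta> > 0"
    have c: "Complex (-3) (-\<eta>/2) - Complex (-3) (\<eta>/2) = Complex 0 (-\<eta>)" by (simp add: complex_eq_iff)
    have "norm (I3 \<eta>) \<le> 2 * norm (Complex (-3) (-\<eta>/2) - Complex (-3) (\<eta>/2))"
      unfolding I3_def
      by (rule contour_integral_bound_linepath)
         (use cont_edges(3)[OF h] F_bound in \<open>auto simp: FF_def contour_integrable_continuous_linepath\<close>)
    also have "norm (Complex (-3) (-\<eta>/2) - Complex (-3) (\<eta>/2)) = \<eta>"
      unfolding c using h by (simp add: complex_norm)
    finally show "norm (I3 \<eta>) \<le> 2 * \<eta>" .
  qed
  have L2: "((\<lambda>\<eta>. integral {0..1} (f2 \<eta>)) \<longlongrightarrow> 0) (at_right 0)"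
  proof -
    have "((\<lambda>\<eta>. integral {0..1} (f2 \<eta>)) \<longlongrightarrow> integral {0..1} (\<lambda>t::real. 0)) (at_right 0)"
    proof (rule dc_at_right[where B = 12 and f = f2 and g = "\<lambda>t::real. 0"])
      show "f2 \<eta> integrable_on {0..1}" if "\<eta> > 0" for \<eta> using int2[OF that] by simp
      show "norm (f2 \<eta> t) \<le> 12" for \<eta> t
        using FF_bound[of \<eta> "Complex (3-6*t) (\<eta>/2)"] unfolding f2_def by (simp add: norm_mult)
      show "((\<lambda>\<eta>. f2 \<eta> t) \<longlongrightarrow> 0) (at_right 0)" for t
        unfolding f2_def using tendsto_mult[OF top_lim[of "3-6*t"] tendsto_const[of "-6"]] by simp
    qed
    then show ?thesis by simp
  qed
  have L4: "((\<lambda>\<eta>. integral {0..1} (f4 \<eta>)) \<longlongrightarrow> (2*pi) *\<^sub>R \<i>) (at_right 0)"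
  proof -
    define g where "g t = (let v = m0 (of_real (6*t-3)) in cnj v * v * (v - cnj v)) * 6" for t
    have "((\<lambda>\<eta>. integral {0..1} (f4 \<eta>)) \<longlongrightarrow> integral {0..1} g) (at_right 0)"
    proof (rule dc_at_right[where B = 12])
      show "f4 \<eta> integrable_on {0..1}" if "\<eta> > 0" for \<eta> using int4[OF that] by simp
      show "norm (f4 \<eta> t) \<le> 12" for \<eta> t
        using FF_bound[of \<eta> "Complex (6*t-3) (-\<eta>/2)"] unfolding f4_def by (simp add: norm_mult)
      show "((\<lambda>\<eta>. f4 \<eta> t) \<longlongrightarrow> g t) (at_right 0)" for t
        unfolding f4_def g_def Let_def using tendsto_mult[OF bottom_lim[of "6*t-3"] tendsto_const[of "6"]] by simp
    qed
    moreover have "g = (\<lambda>t. (if \<bar>6*t-3\<bar> \<le> 2 then 6 * sqrt (4 - (6*t-3)^2) else 0) *\<^sub>R \<i>)"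
      unfolding g_def Let_def using limit_value by (simp add: fun_eq_iff mult.commute)
    moreover have "((\<lambda>t. (if \<bar>6*t-3\<bar> \<le> 2 then 6 * sqrt (4 - (6*t-3)^2) else 0) *\<^sub>R \<i>) has_integral (2*pi) *\<^sub>R \<i>) {0..1}"
      by (rule has_integral_scaleR_left[OF h_integral])
    ultimately show ?thesis by (simp add: integral_unique)
  qed
  have "((\<lambda>\<eta>. I1 \<eta> + (integral {0..1} (f2 \<eta>) + (I3 \<eta> + integral {0..1} (f4 \<eta>)))) \<longlongrightarrow> 0 + (0 + (0 + (2*pi) *\<^sub>R \<i>))) (at_right 0)"
    by (intro tendsto_add L1 L2 L3 L4)
  moreover have "eventually (\<lambda>\<eta>. I1 \<eta> + (integral {0..1} (f2 \<eta>) + (I3 \<eta> + integral {0..1} (f4 \<eta>))) = contour_integral (rect_contour \<eta>) (FF \<eta>)) (at_right 0)"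
    using eventually_at_right_less[of 0] by eventually_elim (rule split[symmetric])
  ultimately show ?thesis by (rule Lim_transform_eventually)
qed

theorem lemma5p5:
  shows "((\<lambda>\<eta>. Im (contour_integral (rect_contour \<eta>)
            (\<lambda>z. m0 z * m0 (z + \<i> * of_real \<eta>) * (m0 (z + \<i> * of_real \<eta>) - m0 z))))
          \<longlongrightarrow> 2 * pi) (at_right 0)"
proof -
  have e: "(\<lambda>z. m0 z * m0 (z + \<i> * of_real \<eta>) * (m0 (z + \<i> * of_real \<eta>) - m0 z)) = FF \<eta>" for \<eta>
    by (simp add: FF_def fun_eq_iff)
  show ?thesis unfolding e using tendsto_Im[OF main_lim] by simp
qed

end
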